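(* Let $\mathcal A\in\mathbb C^{n_1\times n_2\times n_3}$, $\mathcal A^-\in\mathcal A\{1\}$ and $\mathcal X\in\mathbb C^{n_2\times n_1\times n_3}$. The following are equivalent: (a) $\mathcal X=\mathcal A^-\mathcal A\mathcal A^*$; (b) $\mathcal X(\mathcal A^\dagger)^*\mathcal X=\mathcal X$, $(\mathcal A^\dagger)^*\mathcal X(\mathcal A^\dagger)^*=(\mathcal A^\dagger)^*$, $\mathcal A\mathcal X=\mathcal A\mathcal A^*$ and $\mathcal X(\mathcal A^\dagger)^*=\mathcal A^-\mathcal A$; (c) $\mathcal X(\mathcal A^\dagger)^*\mathcal X=\mathcal X$, $(\mathcal A^\dagger)^*\mathcal X(\mathcal A^\dagger)^*=(\mathcal A^\dagger)^*$, $(\mathcal A^\dagger)^*\mathcal X=\mathcal A\mathcal A^\dagger$ and $\mathcal X(\mathcal A^\dagger)^*=\mathcal A^-\mathcal A$; (d) $\mathcal X(\mathcal A^\dagger)^*\mathcal X=\mathcal X$, $(\mathcal A^\dagger)^*\mathcal X=\mathcal A\mathcal A^\dagger$ and $\mathcal X(\mathcal A^\dagger)^*=\mathcal A^-\mathcal A$; (e) $\mathcal A^-\mathcal A\mathcal X=\mathcal X$ and $\mathcal A\mathcal X=\mathcal A\mathcal A^*$.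
   Context: Fix a nonsingular matrix $M\in\mathbb C^{n_3\times n_3}$. For $\mathcal C\in\mathbb C^{n_1\times n_2\times n_3}$ let $\widehat{\mathcal C}=\mathcal C\times_3M$, i.e. $\widehat{\mathcal C}_{ijk}=\sum_{l=1}^{n_3}M_{kl}\mathcal C_{ijl}$, and let $\widehat{\mathcal C}^{(i)}$ denote its $i$-th frontal slice. The M-product $\mathcal C\star_M\mathcal D$ of $\mathcal C\in\mathbb C^{n_1\times n_2\times n_3}$ and $\mathcal D\in\mathbb C^{n_2\times l\times n_3}$ is the unique tensor with $\widehat{\mathcal C\star_M\mathcal D}^{(i)}=\widehat{\mathcal C}^{(i)}\widehat{\mathcal D}^{(i)}$ for all $i\in[n_3]$. Juxtaposition of tensors denotes the M-product. The conjugate transpose $\mathcal A^*$ is defined by $\widehat{\mathcal A^*}^{(i)}=(\widehat{\mathcal A}^{(i)})^*$. The Moore–Penrose inverse $\mathcal A^\dagger$ is the unique $\mathcal W$ satisfying $\mathcal A\mathcal W\mathcal A=\mathcal A$, $\mathcal W\mathcal A\mathcal W=\mathcal W$, $(\mathcal A\mathcal W)^*=\mathcal A\mathcal W$, $(\mathcal W\mathcal A)^*=\mathcal W\mathcal A$. $\mathcal A\{1\}$ is the set of all $\mathcal W$ with $\mathcal A\mathcal W\mathcal A=\mathcal A$. *)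

theory Defs
  imports "HOL-Analysis.Analysis"
begin

text \<open>A third-order tensor in C^(n1 x n2 x n3) is represented by its frontal slices:
  an element of type (complex^'n2^'n1)^'n3, i.e. C $ k $ i $ j = C_{ijk}.
  The dimensions n1, n2, n3 are the cardinalities of the finite index types.\<close>

type_synonym ('n1, 'n2, 'n3) tensor = "(complex^'n2^'n1)^'n3"

definition tensor_hat :: "complex^'n3^'n3 \<Rightarrow> ('n1::finite,'n2::finite,'n3::finite) tensor
    \<Rightarrow> ('n1,'n2,'n3) tensor" where
  "tensor_hat M C = (\<chi> k. \<chi> i j. \<Sum>l\<in>UNIV. M $ k $ l * C $ l $ i $ j)"

definition cmat_adj :: "complex^'n^'m \<Rightarrow> complex^'m^'n" where
  "cmat_adj A = (\<chi> i j. cnj (A $ j $ i))"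

definition mprod :: "complex^'n3^'n3 \<Rightarrow> ('n1::finite,'n2::finite,'n3::finite) tensor
    \<Rightarrow> ('n2,'l::finite,'n3) tensor \<Rightarrow> ('n1,'l,'n3) tensor" where
  "mprod M C D = (THE Z. \<forall>k. tensor_hat M Z $ k = tensor_hat M C $ k ** tensor_hat M D $ k)"

definition tadj :: "complex^'n3^'n3 \<Rightarrow> ('n1::finite,'n2::finite,'n3::finite) tensor
    \<Rightarrow> ('n2,'n1,'n3) tensor" where
  "tadj M A = (THE Z. \<forall>k. tensor_hat M Z $ k = cmat_adj (tensor_hat M A $ k))"

definition tpinv :: "complex^'n3^'n3 \<Rightarrow> ('n1::finite,'n2::finite,'n3::finite) tensor
    \<Rightarrow> ('n2,'n1,'n3) tensor" where
  "tpinv M A = (THE W. mprod M (mprod M A W) A = A \<and> mprod M (mprod M W A) W = W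
      \<and> tadj M (mprod M A W) = mprod M A W \<and> tadj M (mprod M W A) = mprod M W A)"

definition tinner :: "complex^'n3^'n3 \<Rightarrow> ('n1::finite,'n2::finite,'n3::finite) tensor
    \<Rightarrow> ('n2,'n1,'n3) tensor set" where
  "tinner M A = {W. mprod M (mprod M A W) A = A}"

end

theory Submission
  imports Defs
begin

lemma hat_comp: "tensor_hat M (tensor_hat N C) = tensor_hat (M ** N) C"
proof -
  have "\<And>k i j. (\<Sum>l\<in>UNIV. M $ k $ l * (\<Sum>m\<in>UNIV. N $ l $ m * C $ m $ i $ j))
     = (\<Sum>m\<in>UNIV. (\<Sum>l\<in>UNIV. M $ k $ l * N $ l $ m) * C $ m $ i $ j)"
    by (simp add: sum_distrib_left sum_distrib_right mult.assoc) (rule sum.swap)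
  then show ?thesis by (simp add: vec_eq_iff matrix_matrix_mult_def tensor_hat_def)
qed

lemma hat_one: "tensor_hat (mat 1) C = C"
proof -
  have "\<And>k i j. (\<Sum>l\<in>UNIV. (if k = l then 1 else 0) * C $ l $ i $ j) = C $ k $ i $ j"
    by (simp add: if_distrib[of "\<lambda>x. x * _"] cong: if_cong)
  then show ?thesis by (simp add: vec_eq_iff mat_def tensor_hat_def)
qed

lemma minv:
  assumes "invertible M"
  shows "M ** matrix_inv M = mat 1" "matrix_inv M ** M = mat 1"
proof -
  have "\<exists>A'. M ** A' = mat 1 \<and> A' ** M = mat 1" using assms invertible_def by blast
  then have "M ** matrix_inv M = mat 1 \<and> matrix_inv M ** M = mat 1"
    unfolding matrix_inv_def by (rule someI_ex)
  then show "M ** matrix_inv M = mat 1" "matrix_inv M ** M = mat 1" by auto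
qed

lemma hat_N1: "invertible M \<Longrightarrow> tensor_hat M (tensor_hat (matrix_inv M) C) = C"
  by (simp add: hat_comp minv hat_one)
lemma hat_N2: "invertible M \<Longrightarrow> tensor_hat (matrix_inv M) (tensor_hat M C) = C"
  by (simp add: hat_comp minv hat_one)

lemma hat_inj:
  assumes "invertible M"
  shows "(X = Y) \<longleftrightarrow> (\<forall>k. tensor_hat M X $ k = tensor_hat M Y $ k)"
proof -
  have "tensor_hat M X = tensor_hat M Y \<Longrightarrow> X = Y" by (metis hat_N2[OF assms])
  then show ?thesis by (metis vec_eq_iff)
qed

lemma the_hat:
  assumes "invertible M"
  shows "\<exists>Z. (THE Z. \<forall>k. tensor_hat M Z $ k = F k) = Z \<and> (\<forall>k. tensor_hat M Z $ k = F k)"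
proof -
  let ?Z = "tensor_hat (matrix_inv M) (\<chi> k. F k)"
  have z: "\<forall>k. tensor_hat M ?Z $ k = F k" by (simp add: hat_N1[OF assms])
  have "(THE Z. \<forall>k. tensor_hat M Z $ k = F k) = ?Z"
  proof (rule the_equality)
    show "\<forall>k. tensor_hat M ?Z $ k = F k" by (rule z)
  next
    fix Z assume "\<forall>k. tensor_hat M Z $ k = F k"
    then have "tensor_hat M Z = (\<chi> k. F k)" by (simp add: vec_eq_iff)
    then show "Z = ?Z" by (metis hat_N2[OF assms])
  qed
  with z show ?thesis by auto
qed

lemma hat_mprod:
  assumes "invertible M"
  shows "tensor_hat M (mprod M C D) $ k = tensor_hat M C $ k ** tensor_hat M D $ k"
  using the_hat[OF assms, of "\<lambda>k. tensor_hat M C $ k ** tensor_hat M D $ k"]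
  unfolding mprod_def by auto

lemma hat_tadj:
  assumes "invertible M"
  shows "tensor_hat M (tadj M C) $ k = cmat_adj (tensor_hat M C $ k)"
  using the_hat[OF assms, of "\<lambda>k. cmat_adj (tensor_hat M C $ k)"]
  unfolding tadj_def by auto

lemma cmat_adj_mult: "cmat_adj (A ** B) = cmat_adj B ** cmat_adj (A::complex^_^_)"
  unfolding cmat_adj_def
  by (simp add: vec_eq_iff matrix_matrix_mult_def mult.commute)

lemma cmat_adj_adj[simp]: "cmat_adj (cmat_adj A) = A"
  unfolding cmat_adj_def by (simp add: vec_eq_iff)

lemma mm_diff_l: "(A::'a::comm_ring_1^'n^'m) ** (B - C) = A ** B - A ** C"
  by (simp add: vec_eq_iff matrix_matrix_mult_def sum_subtractf algebra_simps)
lemma mm_diff_r: "(B - C) ** (A::'a::comm_ring_1^'n^'m) = B ** A - C ** A"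
  by (simp add: vec_eq_iff matrix_matrix_mult_def sum_subtractf algebra_simps)
lemma mm_zero_r: "(A::'a::comm_ring_1^'n^'m) ** (0::'a^'k^'n) = 0"
  by (simp add: vec_eq_iff matrix_matrix_mult_def)
lemma cmat_adj_diff: "cmat_adj (A - B) = cmat_adj A - cmat_adj B"
  unfolding cmat_adj_def by (simp add: vec_eq_iff)

lemma adj_self_zero:
  fixes E :: "complex^'n^'m"
  assumes "cmat_adj E ** E = 0"
  shows "E = 0"
proof -
  have "\<forall>i j. E $ i $ j = 0"
  proof (intro allI)
    fix i j
    have "(cmat_adj E ** E) $ j $ j = (\<Sum>l\<in>UNIV. E $ l $ j * cnj (E $ l $ j))"
      by (simp add: matrix_matrix_mult_def cmat_adj_def mult.commute)
    also have "\<dots> = (\<Sum>l\<in>UNIV. of_real ((norm (E $ l $ j))\<^sup>2))"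
      by (simp only: complex_norm_square)
    also have "\<dots> = of_real (\<Sum>l\<in>UNIV. (norm (E $ l $ j))\<^sup>2)" by (simp only: of_real_sum)
    finally have X: "(cmat_adj E ** E) $ j $ j = of_real (\<Sum>l\<in>UNIV. (norm (E $ l $ j))\<^sup>2)" .
    have "(cmat_adj E ** E) $ j $ j = 0" using assms by simp
    then have "(of_real (\<Sum>l\<in>UNIV. (norm (E $ l $ j))\<^sup>2) :: complex) = 0" using X by simp
    then have "(\<Sum>l\<in>UNIV. (norm (E $ l $ j))\<^sup>2) = 0" by (simp only: of_real_eq_0_iff)
    then have "\<forall>l\<in>UNIV. (norm (E $ l $ j))\<^sup>2 = 0"
      by (subst sum_nonneg_eq_0_iff[symmetric]) auto
    then show "E $ i $ j = 0" by simp
  qed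
  then show ?thesis by (simp add: vec_eq_iff)
qed

lemma g1_exists:
  fixes A :: "'a::field^'n^'m"
  shows "\<exists>G. A ** G ** A = A"
proof -
  obtain g where g: "Vector_Spaces.linear (*s) (*s) g" "\<forall>v\<in>range ((*v) A). A *v (g v) = v"
    using vec.linear_exists_right_inverse_on[OF matrix_vector_mul_linear_gen[of A], of UNIV]
    by auto
  have "A ** matrix g ** A = A"
    unfolding matrix_eq
    by (simp add: matrix_vector_mul_assoc[symmetric] matrix_works[OF g(1)] g(2))
  then show ?thesis by blast
qed

lemma g13_exists:
  fixes A :: "complex^'n^'m"
  shows "\<exists>T. A ** T ** A = A \<and> cmat_adj (A ** T) = A ** T"
proof -
  define H where "H = cmat_adj A ** A"
  obtain Hm where Hm: "H ** Hm ** H = H" using g1_exists by blast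
  define K where "K = Hm ** H"
  define E where "E = A ** K - A"
  have "cmat_adj A ** E = H ** Hm ** H - H"
    unfolding E_def K_def H_def by (simp add: mm_diff_l matrix_mul_assoc)
  then have AE: "cmat_adj A ** E = 0" using Hm by simp
  have "cmat_adj E ** E = cmat_adj K ** (cmat_adj A ** E) - cmat_adj A ** E"
  proof -
    have "cmat_adj E = cmat_adj K ** cmat_adj A - cmat_adj A"
      unfolding E_def by (simp add: cmat_adj_diff cmat_adj_mult)
    then show ?thesis by (simp add: mm_diff_r matrix_mul_assoc)
  qed
  then have "cmat_adj E ** E = 0" using AE by (simp add: mm_zero_r)
  then have "E = 0" by (rule adj_self_zero)
  then have 1: "A ** (Hm ** cmat_adj A) ** A = A" unfolding E_def K_def H_def
    by (simp add: matrix_mul_assoc)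
  have 2: "cmat_adj A ** A ** cmat_adj Hm ** cmat_adj A = cmat_adj A"
    using arg_cong[OF 1, of cmat_adj] by (simp add: cmat_adj_mult matrix_mul_assoc)
  have "A ** (Hm ** cmat_adj A) = A ** Hm ** (cmat_adj A ** A ** cmat_adj Hm ** cmat_adj A)"
    using 2 by (simp add: matrix_mul_assoc)
  also have "\<dots> = (A ** (Hm ** cmat_adj A) ** A) ** cmat_adj Hm ** cmat_adj A"
    by (simp add: matrix_mul_assoc)
  also have "\<dots> = A ** cmat_adj Hm ** cmat_adj A" using 1 by simp
  also have "\<dots> = cmat_adj (A ** (Hm ** cmat_adj A))" by (simp add: cmat_adj_mult matrix_mul_assoc)
  finally show ?thesis using 1 by metis
qed

lemma mp_exists:
  fixes A :: "complex^'n^'m"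
  shows "\<exists>G. A ** G ** A = A \<and> G ** A ** G = G \<and> cmat_adj (A ** G) = A ** G
     \<and> cmat_adj (G ** A) = G ** A"
proof -
  obtain T where T: "A ** T ** A = A" "cmat_adj (A ** T) = A ** T" using g13_exists by blast
  obtain S where S: "cmat_adj A ** S ** cmat_adj A = cmat_adj A" "cmat_adj (cmat_adj A ** S) = cmat_adj A ** S"
    using g13_exists by blast
  define U where "U = cmat_adj S"
  have U1: "A ** U ** A = A" using arg_cong[OF S(1), of cmat_adj]
    by (simp add: U_def cmat_adj_mult matrix_mul_assoc)
  have U2: "cmat_adj (U ** A) = U ** A" using S(2)
    by (simp add: U_def cmat_adj_mult)
  define G where "G = U ** A ** T"
  have "A ** G ** A = A" unfolding G_def using U1 T(1) by (metis matrix_mul_assoc)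
  moreover have "G ** A ** G = G" unfolding G_def using U1 T(1) by (metis matrix_mul_assoc)
  moreover have "A ** G = A ** T" unfolding G_def using U1 by (metis matrix_mul_assoc)
  moreover have "G ** A = U ** A" unfolding G_def using T(1) by (metis matrix_mul_assoc)
  ultimately show ?thesis using T(2) U2 by metis
qed

lemma mp_assoc:
  assumes "invertible M"
  shows "mprod M (mprod M A B) C = mprod M A (mprod M B C)"
  by (simp add: hat_inj[OF assms] hat_mprod[OF assms] matrix_mul_assoc)

lemma tadj_mprod:
  assumes "invertible M"
  shows "tadj M (mprod M A B) = mprod M (tadj M B) (tadj M A)"
  by (simp add: hat_inj[OF assms] hat_mprod[OF assms] hat_tadj[OF assms] cmat_adj_mult)

lemma tadj_tadj:
  assumes "invertible M"
  shows "tadj M (tadj M A) = A"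
  by (simp add: hat_inj[OF assms] hat_tadj[OF assms])

lemma tpinv_props:
  assumes M: "invertible M"
  shows "mprod M (mprod M A (tpinv M A)) A = A \<and> mprod M (mprod M (tpinv M A) A) (tpinv M A) = tpinv M A
      \<and> tadj M (mprod M A (tpinv M A)) = mprod M A (tpinv M A) \<and> tadj M (mprod M (tpinv M A) A) = mprod M (tpinv M A) A"
proof -
  let ?Q = "\<lambda>W. mprod M (mprod M A W) A = A \<and> mprod M (mprod M W A) W = W
      \<and> tadj M (mprod M A W) = mprod M A W \<and> tadj M (mprod M W A) = mprod M W A"
  define F where "F k = (SOME G. tensor_hat M A $ k ** G ** tensor_hat M A $ k = tensor_hat M A $ k
     \<and> G ** tensor_hat M A $ k ** G = G \<and> cmat_adj (tensor_hat M A $ k ** G) = tensor_hat M A $ k ** G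
     \<and> cmat_adj (G ** tensor_hat M A $ k) = G ** tensor_hat M A $ k)" for k
  have Fk: "tensor_hat M A $ k ** F k ** tensor_hat M A $ k = tensor_hat M A $ k
     \<and> F k ** tensor_hat M A $ k ** F k = F k \<and> cmat_adj (tensor_hat M A $ k ** F k) = tensor_hat M A $ k ** F k
     \<and> cmat_adj (F k ** tensor_hat M A $ k) = F k ** tensor_hat M A $ k" for k
    unfolding F_def by (rule someI_ex) (rule mp_exists)
  define W where "W = tensor_hat (matrix_inv M) (\<chi> k. F k)"
  have hW: "tensor_hat M W $ k = F k" for k by (simp add: W_def hat_N1[OF M])
  have QW: "?Q W"
    by (simp add: hat_inj[OF M] hat_mprod[OF M] hat_tadj[OF M] hW Fk)
  have uniq: "W2 = W1" if 1: "?Q W1" and 2: "?Q W2" for W1 W2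
  proof -
    have As1: "tadj M A = mprod M (mprod M (tadj M A) A) W2"
      using arg_cong[of _ _ "tadj M", OF conjunct1[OF 2]] 2
      by (simp add: tadj_mprod[OF M] mp_assoc[OF M])
    have As2: "tadj M A = mprod M (mprod M W1 A) (tadj M A)"
    proof -
      have "tadj M A = tadj M (mprod M A (mprod M W1 A))" using 1 by (simp add: mp_assoc[OF M])
      also have "\<dots> = mprod M (tadj M (mprod M W1 A)) (tadj M A)" by (simp add: tadj_mprod[OF M])
      also have "\<dots> = mprod M (mprod M W1 A) (tadj M A)" using 1 by simp
      finally show ?thesis .
    qed
    have "W1 = mprod M (mprod M W1 (tadj M W1)) (tadj M A)"
      using 1 by (metis tadj_mprod[OF M] mp_assoc[OF M])
    also have "\<dots> = mprod M (mprod M W1 (tadj M W1)) (mprod M (mprod M (tadj M A) A) W2)"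
      using As1 by metis
    also have "\<dots> = mprod M (mprod M W1 (tadj M (mprod M A W1))) (mprod M A W2)"
      by (simp add: tadj_mprod[OF M] mp_assoc[OF M])
    also have "\<dots> = mprod M W1 (mprod M A W2)"
      using 1 by (simp add: mp_assoc[OF M])
    finally have a: "W1 = mprod M W1 (mprod M A W2)" .
    have "W2 = mprod M (tadj M A) (mprod M (tadj M W2) W2)"
      using 2 by (metis tadj_mprod[OF M] mp_assoc[OF M])
    also have "\<dots> = mprod M (mprod M (mprod M W1 A) (tadj M A)) (mprod M (tadj M W2) W2)"
      using As2 by metis
    also have "\<dots> = mprod M (mprod M W1 A) (mprod M (tadj M (mprod M W2 A)) W2)"
      by (simp add: tadj_mprod[OF M] mp_assoc[OF M])
    also have "\<dots> = mprod M W1 (mprod M A W2)"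
      using 2 by (simp add: mp_assoc[OF M])
    finally show ?thesis using a by simp
  qed
  have "tpinv M A = W" unfolding tpinv_def
    by (rule the_equality[of ?Q W]) (use QW uniq in auto)
  then show ?thesis using QW by simp
qed

theorem theorem3p11:
  fixes M :: "complex^'n3^'n3"
    and A :: "('n1::finite,'n2::finite,'n3::finite) tensor"
    and Am X :: "('n2,'n1,'n3) tensor"
  assumes "invertible M"
    and "Am \<in> tinner M A"
  defines "P \<equiv> tadj M (tpinv M A)"
  shows
   "(X = mprod M (mprod M Am A) (tadj M A)
     \<longleftrightarrow> mprod M (mprod M X P) X = X \<and> mprod M (mprod M P X) P = P
         \<and> mprod M A X = mprod M A (tadj M A) \<and> mprod M X P = mprod M Am A)
  \<and> (X = mprod M (mprod M Am A) (tadj M A)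
     \<longleftrightarrow> mprod M (mprod M X P) X = X \<and> mprod M (mprod M P X) P = P
         \<and> mprod M P X = mprod M A (tpinv M A) \<and> mprod M X P = mprod M Am A)
  \<and> (X = mprod M (mprod M Am A) (tadj M A)
     \<longleftrightarrow> mprod M (mprod M X P) X = X
         \<and> mprod M P X = mprod M A (tpinv M A) \<and> mprod M X P = mprod M Am A)
  \<and> (X = mprod M (mprod M Am A) (tadj M A)
     \<longleftrightarrow> mprod M (mprod M Am A) X = X \<and> mprod M A X = mprod M A (tadj M A))"
proof -
  note M = assms(1)
  note as = mp_assoc[OF M]
  define G where "G = tpinv M A"
  define As where "As = tadj M A"
  have P: "P = tadj M G" unfolding P_def G_def ..
  have AmL: "mprod M (mprod M A Am) A = A" using assms(2) unfolding tinner_def by simp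
  have Am: "mprod M A (mprod M Am A) = A" using AmL by (simp add: as)
  have Am': "mprod M A (mprod M Am (mprod M A Z)) = mprod M A Z" for Z :: "('n2,'k::finite,'n3) tensor"
    by (simp add: as[symmetric] AmL)
  have F1L: "mprod M (mprod M A G) A = A" and F2L: "mprod M (mprod M G A) G = G"
    and F3: "tadj M (mprod M A G) = mprod M A G" and F4: "tadj M (mprod M G A) = mprod M G A"
    using tpinv_props[OF M, of A] unfolding G_def by simp_all
  have F1: "mprod M A (mprod M G A) = A" using F1L by (simp add: as)
  have F2: "mprod M G (mprod M A G) = G" using F2L by (simp add: as)
  have F1': "mprod M A (mprod M G (mprod M A Z)) = mprod M A Z" for Z :: "('n2,'k::finite,'n3) tensor"
    by (simp add: as[symmetric] F1L)
  have D1L: "mprod M (mprod M As A) G = As"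
  proof -
    have "As = tadj M (mprod M (mprod M A G) A)" using F1L unfolding As_def by simp
    also have "\<dots> = mprod M As (tadj M (mprod M A G))" unfolding As_def by (simp add: tadj_mprod[OF M])
    also have "\<dots> = mprod M (mprod M As A) G" using F3 by (simp add: as)
    finally show ?thesis by simp
  qed
  have D1: "mprod M As (mprod M A G) = As" using D1L by (simp add: as)
  have D2: "mprod M As P = mprod M G A"
    using F4 unfolding As_def P by (simp add: tadj_mprod[OF M])
  have D2': "mprod M As (mprod M P Z) = mprod M G (mprod M A Z)" for Z :: "('n2,'k::finite,'n3) tensor"
    by (simp add: as[symmetric] D2)
  have D3L: "mprod M (mprod M P G) A = P"
  proof -
    have "P = tadj M (mprod M (mprod M G A) G)" using F2L unfolding P by simp
    also have "\<dots> = mprod M P (tadj M (mprod M G A))" unfolding P by (simp add: tadj_mprod[OF M])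
    also have "\<dots> = mprod M (mprod M P G) A" using F4 by (simp add: as)
    finally show ?thesis by simp
  qed
  have D4: "mprod M P As = mprod M A G"
    using F3 unfolding As_def P by (simp add: tadj_mprod[OF M])
  have D5: "mprod M P (mprod M Am A) = P"
  proof -
    have "mprod M P (mprod M Am A) = mprod M (mprod M (mprod M P G) A) (mprod M Am A)"
      using D3L by simp
    also have "\<dots> = mprod M (mprod M P G) (mprod M (mprod M A Am) A)" by (simp add: as)
    also have "\<dots> = P" using AmL D3L by simp
    finally show ?thesis .
  qed
  have D5': "mprod M P (mprod M Am (mprod M A Z)) = mprod M P Z" for Z :: "('n2,'k::finite,'n3) tensor"
  proof -
    have "mprod M P (mprod M Am (mprod M A Z)) = mprod M (mprod M P (mprod M Am A)) Z" by (simp add: as)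
    then show ?thesis using D5 by simp
  qed
  define X0 where "X0 = mprod M Am (mprod M A As)"
  have a1: "mprod M A X0 = mprod M A As" unfolding X0_def by (simp add: Am')
  have a2: "mprod M X0 P = mprod M Am A" unfolding X0_def by (simp add: as D2 F1' F1)
  have a6: "mprod M Am (mprod M A X0) = X0" unfolding X0_def by (simp add: Am')
  have a3: "mprod M X0 (mprod M P X0) = X0"
  proof -
    have "mprod M X0 (mprod M P X0) = mprod M (mprod M X0 P) X0" by (simp add: as)
    also have "\<dots> = mprod M (mprod M Am A) X0" by (simp only: a2)
    also have "\<dots> = X0" using a6 by (simp add: as)
    finally show ?thesis .
  qed
  have a4: "mprod M P (mprod M X0 P) = P" using a2 D5 by simp
  have a5: "mprod M P X0 = mprod M A G" unfolding X0_def by (simp add: D5' D4)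
  have fwd: "mprod M (mprod M X0 P) X0 = X0 \<and> mprod M (mprod M P X0) P = P
         \<and> mprod M A X0 = mprod M A As \<and> mprod M P X0 = mprod M A G \<and> mprod M X0 P = mprod M Am A
         \<and> mprod M (mprod M Am A) X0 = X0"
  proof (intro conjI)
    show "mprod M (mprod M X0 P) X0 = X0" unfolding as by (rule a3)
    show "mprod M (mprod M P X0) P = P" unfolding as by (rule a4)
    show "mprod M (mprod M Am A) X0 = X0" unfolding as by (rule a6)
  qed (rule a1, rule a5, rule a2)
  have aeq: "X = mprod M (mprod M Am A) As \<longleftrightarrow> X = X0" unfolding X0_def by (simp add: as)
  have be: "X = X0" if "mprod M (mprod M Am A) X = X" "mprod M A X = mprod M A As"
  proof -
    have "X = mprod M (mprod M Am A) X" using that(1) by simp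
    also have "\<dots> = mprod M Am (mprod M A X)" by (simp add: as)
    also have "\<dots> = X0" using that(2) unfolding X0_def by simp
    finally show ?thesis .
  qed
  have bd: "X = X0" if h1: "mprod M (mprod M X P) X = X" and h2: "mprod M P X = mprod M A G"
     and h3: "mprod M X P = mprod M Am A"
  proof -
    have e1: "mprod M (mprod M Am A) X = X" using h1 h3 by simp
    have "mprod M A X = mprod M A (mprod M G (mprod M A X))" by (simp add: F1')
    also have "\<dots> = mprod M A (mprod M As (mprod M P X))" by (simp add: D2')
    also have "\<dots> = mprod M A As" using h2 by (simp add: D1)
    finally show ?thesis using be e1 by blast
  qed
  have bb: "X = X0" if h1: "mprod M (mprod M X P) X = X" and h2: "mprod M A X = mprod M A As"
     and h3: "mprod M X P = mprod M Am A"
  proof -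
    have e1: "mprod M (mprod M Am A) X = X" using h1 h3 by simp
    then show ?thesis using be h2 by blast
  qed
  have fwdX: "mprod M (mprod M X P) X = X \<and> mprod M (mprod M P X) P = P
         \<and> mprod M A X = mprod M A As \<and> mprod M P X = mprod M A G \<and> mprod M X P = mprod M Am A
         \<and> mprod M (mprod M Am A) X = X" if hx: "X = X0" using fwd unfolding hx[symmetric] .
  show ?thesis
    unfolding G_def[symmetric] As_def[symmetric] unfolding aeq using fwdX bb bd be by blast
qed

end
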